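(* Let $\nu\in\mathbb{N}$ and $p\in(0,1)$, and let $G_\nu$ and $g_\nu$ be the c.d.f. and p.d.f. of Student's $t$-distribution with $\nu$ degrees of freedom. For $h\in\mathbb{R}$ and $k\in\mathbb{N}$ let $f_1(h,k):=\int_{-\infty}^{\infty}G_\nu^k(t+h)g_\nu(t)\,dt$. Then there exists $K>0$ such that for every $k>K$ the equation $f_1(h,k)=p$ has a unique positive solution $h$. *)

theory Defs
  imports "HOL-Analysis.Analysis"
begin

definition student_t_pdf :: "nat \<Rightarrow> real \<Rightarrow> real" where
  "student_t_pdf \<nu> t =
     Gamma ((real \<nu> + 1) / 2) / (sqrt (real \<nu> * pi) * Gamma (real \<nu> / 2))
     * (1 + t\<^sup>2 / real \<nu>) powr (- (real \<nu> + 1) / 2)"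

definition student_t_cdf :: "nat \<Rightarrow> real \<Rightarrow> real" where
  "student_t_cdf \<nu> x = (LBINT t:{..x}. student_t_pdf \<nu> t)"

definition f1 :: "nat \<Rightarrow> real \<Rightarrow> nat \<Rightarrow> real" where
  "f1 \<nu> h k = (\<integral>t. (student_t_cdf \<nu> (t + h)) ^ k * student_t_pdf \<nu> t \<partial>lborel)"

end

theory Submission
  imports Defs
begin

definition tf :: "nat \<Rightarrow> real \<Rightarrow> real" where
  "tf \<nu> t = (1 + t\<^sup>2 / real \<nu>) powr (- (real \<nu> + 1) / 2)"

lemma tf_base: "\<nu> \<ge> 1 \<Longrightarrow> 1 + t\<^sup>2 / real \<nu> \<ge> 1"
  by simp

lemma tf_pos: assumes "\<nu> \<ge> 1" shows "tf \<nu> t > 0"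
proof -
  have "1 + t\<^sup>2 / real \<nu> \<noteq> 0" using tf_base[OF assms, of t] by linarith
  thus ?thesis unfolding tf_def by simp
qed

lemma tf_le1: "\<nu> \<ge> 1 \<Longrightarrow> tf \<nu> t \<le> 1"
proof -
  assume "\<nu> \<ge> 1"
  have "1 \<le> 1 + t\<^sup>2 / real \<nu>" by simp
  hence "(1 + t\<^sup>2 / real \<nu>) powr (- (real \<nu> + 1) / 2) \<le> (1 + t\<^sup>2 / real \<nu>) powr 0"
    by (intro powr_mono) auto
  thus ?thesis unfolding tf_def using \<open>1 \<le> 1 + t\<^sup>2 / real \<nu>\<close> by simp
qed

lemma tf_even: "tf \<nu> (-t) = tf \<nu> t" unfolding tf_def by simp

lemma tf_cont: assumes "\<nu> \<ge> 1" shows "isCont (tf \<nu>) t"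
proof -
  have "1 + t\<^sup>2 / real \<nu> \<noteq> 0" using tf_base[OF assms, of t] by linarith
  moreover have "real \<nu> \<noteq> 0" using assms by simp
  ultimately
  show ?thesis unfolding tf_def by (intro continuous_intros) auto
qed

lemma ring_aux: "(s::real) * ((1/2) * a * ((1-x) * b) + x * a * ((-1/2) * b * (-1))) = s/2 * a * b"
  by (simp add: field_simps)

lemma tf_half:
  assumes "\<nu> \<ge> 1"
  shows "set_integrable lborel {0<..} (tf \<nu>)"
    "(LBINT t:{0<..}. tf \<nu> t) = sqrt (real \<nu>) / 2 * Beta (1/2) (real \<nu> / 2)"
proof -
  define g where "g = (\<lambda>x::real. sqrt (real \<nu>) * x powr (1/2) * (1 - x) powr (-1/2))"
  define g' where "g' = (\<lambda>x::real. sqrt (real \<nu>) / 2 * x powr (-1/2) * (1 - x) powr (-3/2))"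
  define B where "B = (\<lambda>x::real. x powr (1/2 - 1) * (1 - x) powr (real \<nu> / 2 - 1))"
  have nu: "real \<nu> > 0" using assms by simp
  have deriv: "(g has_real_derivative g' x) (at x)" if "0 < x" "x < 1" for x
  proof -
    have "(g has_real_derivative sqrt (real \<nu>) * ((1/2) * x powr (1/2 - 1) * (1 - x) powr (-1/2)
        + x powr (1/2) * ((-1/2) * (1 - x) powr (-1/2 - 1) * (-1)))) (at x)"
      unfolding g_def using that
      apply (auto intro!: derivative_eq_intros)
      apply (simp add: distrib_left mult_ac)
      done
    moreover have "sqrt (real \<nu>) * ((1/2) * x powr (1/2 - 1) * (1 - x) powr (-1/2)
        + x powr (1/2) * ((-1/2) * (1 - x) powr (-1/2 - 1) * (-1))) = g' x"
    proof -
      have e1: "(1 - x) powr (-1/2) = (1 - x) * (1 - x) powr (-3/2)"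
      proof -
        have "(1 - x) * (1 - x) powr (-3/2) = (1-x) powr 1 * (1-x) powr (-3/2)" using that by simp
        also have "\<dots> = (1-x) powr (1 + (-3/2))" by (rule powr_add[symmetric])
        also have "\<dots> = (1-x) powr (-1/2)" by simp
        finally show ?thesis by simp
      qed
      have e2: "x powr (1/2) = x * x powr (-1/2)"
      proof -
        have "x * x powr (-1/2) = x powr 1 * x powr (-1/2)" using that by simp
        also have "\<dots> = x powr (1 + (-1/2))" by (rule powr_add[symmetric])
        also have "\<dots> = x powr (1/2)" by simp
        finally show ?thesis by simp
      qed
      have n: "1/2 - 1 = (-1/2::real)" "-1/2-1 = (-3/2::real)" by simp_all
      show ?thesis unfolding g'_def n e1 e2 by (rule ring_aux)
    qed
    ultimately show ?thesis by simp
  qed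
  have fg: "tf \<nu> (g x) * g' x = sqrt (real \<nu>) / 2 * B x" if "0 < x" "x < 1" for x
  proof -
    have x1: "1 - x > 0" using that by simp
    have m: "(-1/2::real) = - (1/2)" by simp
    have sx: "x powr (1/2) = sqrt x" using that by (simp add: powr_half_sqrt)
    have s1: "(1 - x) powr (-1/2) = 1 / sqrt (1 - x)"
      unfolding m powr_minus_divide using x1 by (simp add: powr_half_sqrt)
    have gx: "g x = sqrt (real \<nu>) * sqrt x / sqrt (1 - x)" unfolding g_def sx s1 by simp
    have g2: "(g x)\<^sup>2 = real \<nu> * x / (1 - x)"
      unfolding gx using that x1 nu by (simp add: power_divide power_mult_distrib)
    have base: "1 + (g x)\<^sup>2 / real \<nu> = 1 / (1 - x)"
      unfolding g2 using nu x1 by (simp add: field_simps)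
    have tfg: "tf \<nu> (g x) = (1 - x) powr ((real \<nu> + 1) / 2)"
    proof -
      have "tf \<nu> (g x) = (1 / (1 - x)) powr (- (real \<nu> + 1) / 2)" unfolding tf_def base ..
      also have "\<dots> = 1 / (1 - x) powr (- (real \<nu> + 1) / 2)"
        using x1 by (simp add: powr_divide)
      also have "(- (real \<nu> + 1) / 2) = - ((real \<nu> + 1) / 2)" by linarith
      also have "1 / (1 - x) powr - ((real \<nu> + 1) / 2) = (1 - x) powr ((real \<nu> + 1) / 2)"
        by (simp add: powr_minus_divide)
      finally show ?thesis .
    qed
    have "tf \<nu> (g x) * g' x = sqrt (real \<nu>) / 2 * x powr (-1/2) *
            ((1 - x) powr ((real \<nu> + 1) / 2) * (1 - x) powr (-3/2))"
      unfolding tfg g'_def by (simp add: mult_ac)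
    also have "(1 - x) powr ((real \<nu> + 1) / 2) * (1 - x) powr (-3/2) = (1 - x) powr ((real \<nu> + 1) / 2 + (-3/2))"
      by (rule powr_add[symmetric])
    also have "(real \<nu> + 1) / 2 + (-3/2) = real \<nu> / 2 - 1" by (simp add: field_simps)
    also have "(-1/2::real) = 1/2 - 1" by simp
    finally show ?thesis unfolding B_def by (simp add: mult_ac)
  qed
  have gsq: "g x = sqrt (real \<nu> * x / (1 - x))" if "0 < x" "x < 1" for x
  proof -
    have x1: "1 - x > 0" using that by simp
    have m: "(-1/2::real) = - (1/2)" by simp
    have sx: "x powr (1/2) = sqrt x" using that by (simp add: powr_half_sqrt)
    have s1: "(1 - x) powr (-1/2) = 1 / sqrt (1 - x)"
      unfolding m powr_minus_divide using x1 by (simp add: powr_half_sqrt)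
    show ?thesis unfolding g_def sx s1 by (simp add: real_sqrt_mult real_sqrt_divide)
  qed
  have sub0: "einterval 0 1 = {0<..<(1::real)}"
    by (simp add: zero_ereal_def one_ereal_def)
  have Bi: "set_integrable lborel {0<..<1} B"
    unfolding B_def
    by (rule set_integrable_subset[OF integrable_Beta]) (use nu in auto)
  have Bint: "set_integrable lborel (einterval 0 1) (\<lambda>x. tf \<nu> (g x) * g' x)"
    unfolding sub0
  proof -
    have "set_integrable lborel {0<..<1} (\<lambda>x. sqrt (real \<nu>) / 2 * B x)"
      using Bi by simp
    moreover have "set_integrable lborel {0<..<1} (\<lambda>x. tf \<nu> (g x) * g' x) =
       set_integrable lborel {0<..<1} (\<lambda>x. sqrt (real \<nu>) / 2 * B x)"
      by (rule set_integrable_cong) (simp_all add: fg)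
    ultimately show "set_integrable lborel {0<..<1} (\<lambda>x. tf \<nu> (g x) * g' x)" by simp
  qed
  have A: "(g \<longlongrightarrow> 0) (at_right 0)"
  proof -
    have "((\<lambda>x. sqrt (real \<nu> * x / (1 - x))) \<longlongrightarrow> sqrt (real \<nu> * 0 / (1 - 0))) (at_right 0)"
      by (intro tendsto_intros) auto
    hence "((\<lambda>x. sqrt (real \<nu> * x / (1 - x))) \<longlongrightarrow> 0) (at_right 0)" by simp
    moreover have "eventually (\<lambda>x. sqrt (real \<nu> * x / (1 - x)) = g x) (at_right (0::real))"
      unfolding eventually_at_right[of 0 "1::real", simplified] using gsq by (intro exI[of _ 1]) auto
    ultimately show ?thesis by (rule Lim_transform_eventually)
  qed
  have Bl: "filterlim g at_top (at_left 1)"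
  proof -
    have inv: "filterlim (\<lambda>x. inverse (1 - x)) at_top (at_left (1::real))"
    proof (rule filterlim_inverse_at_top)
      show "((\<lambda>x. 1 - x) \<longlongrightarrow> (0::real)) (at_left 1)"
        by (auto intro!: tendsto_eq_intros)
      show "\<forall>\<^sub>F x in at_left 1. 0 < 1 - (x::real)"
        unfolding eventually_at_left_field by (intro exI[of _ 0]) auto
    qed
    have "filterlim (\<lambda>x. real \<nu> * x * inverse (1 - x)) at_top (at_left (1::real))"
    proof (rule filterlim_tendsto_pos_mult_at_top[of _ "real \<nu>"])
      show "((\<lambda>x. real \<nu> * x) \<longlongrightarrow> real \<nu>) (at_left (1::real))"
        by (auto intro!: tendsto_eq_intros)
    qed (use nu inv in auto)
    hence "filterlim (\<lambda>x. real \<nu> * x / (1 - x)) at_top (at_left (1::real))"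
      by (simp add: divide_inverse)
    hence "filterlim (\<lambda>x. sqrt (real \<nu> * x / (1 - x))) at_top (at_left (1::real))"
      by (rule filterlim_compose[OF sqrt_at_top])
    moreover have ev: "eventually (\<lambda>x. sqrt (real \<nu> * x / (1 - x)) = g x) (at_left (1::real))"
      unfolding eventually_at_left[of 0 "1::real", simplified] using gsq by (intro exI[of _ 0]) auto
    ultimately show ?thesis using filterlim_cong[OF refl refl ev] by simp
  qed
  have p1: "(0::ereal) < 1" by simp
  have p2: "\<And>x. 0 < ereal x \<Longrightarrow> ereal x < 1 \<Longrightarrow> (g has_real_derivative g' x) (at x)"
    using deriv by (simp add: zero_ereal_def one_ereal_def)
  have p3: "\<And>x. 0 < ereal x \<Longrightarrow> ereal x < 1 \<Longrightarrow> isCont (tf \<nu>) (g x)"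
    using tf_cont[OF assms] by blast
  have p4: "\<And>x. 0 < ereal x \<Longrightarrow> ereal x < 1 \<Longrightarrow> isCont g' x"
  proof -
    fix x assume "0 < ereal x" "ereal x < 1"
    hence "0 < x" "x < 1" by (simp_all add: zero_ereal_def one_ereal_def)
    thus "isCont g' x" unfolding g'_def by (intro continuous_intros) auto
  qed
  have p5: "\<And>x. 0 < ereal x \<Longrightarrow> ereal x < 1 \<Longrightarrow> 0 \<le> tf \<nu> (g x)"
    using tf_pos[OF assms] less_imp_le by blast
  have p6: "\<And>x. 0 \<le> ereal x \<Longrightarrow> ereal x \<le> 1 \<Longrightarrow> 0 \<le> g' x"
    unfolding g'_def by simp
  have p7: "((ereal \<circ> g \<circ> real_of_ereal) \<longlongrightarrow> 0) (at_right 0)"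
    unfolding zero_ereal_def ereal_tendsto_simps using A by simp
  have p8: "((ereal \<circ> g \<circ> real_of_ereal) \<longlongrightarrow> \<infinity>) (at_left 1)"
    unfolding one_ereal_def ereal_tendsto_simps using Bl by simp
  note main = interval_integral_substitution_nonneg[OF p1 p2 p3 p4 p5 p6 p7 p8 Bint]
  show "set_integrable lborel {0<..} (tf \<nu>)"
    using main(1) by (simp add: zero_ereal_def)
  have "(LBINT t:{0<..}. tf \<nu> t) = (LBINT x=0..\<infinity>. tf \<nu> x)"
    by (simp add: interval_lebesgue_integral_0_infty)
  also have "\<dots> = (LBINT x:{0<..<1}. tf \<nu> (g x) * g' x)"
    using main(2) interval_lebesgue_integral_le_eq[of 0 1 lborel "\<lambda>x. tf \<nu> (g x) * g' x"] sub0 by simp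
  also have "\<dots> = (LBINT x:{0<..<1}. sqrt (real \<nu>) / 2 * B x)"
    by (rule set_lebesgue_integral_cong) (auto simp: fg)
  also have "\<dots> = sqrt (real \<nu>) / 2 * (LBINT x:{0<..<1}. B x)" by simp
  also have "(LBINT x:{0<..<1}. B x) = (LBINT x:{0..1}. B x)"
  proof (rule set_integral_cong_set)
    show "set_borel_measurable lborel {0..1} B"
      using integrable_Beta[of "1/2" "real \<nu> / 2"] nu unfolding B_def set_integrable_def set_borel_measurable_def
      by auto
    show "set_borel_measurable lborel {0<..<1} B"
      using Bi unfolding set_integrable_def set_borel_measurable_def by auto
    show "AE x in lborel. (x \<in> {0..1}) = (x \<in> {0<..<(1::real)})"
      using AE_lborel_singleton[of 0] AE_lborel_singleton[of 1] by eventually_elim auto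
  qed
  also have "\<dots> = integral {0..1} B"
    using integrable_Beta[of "1/2" "real \<nu> / 2"] nu unfolding B_def
    by (intro set_borel_integral_eq_integral) auto
  also have "\<dots> = Beta (1/2) (real \<nu> / 2)"
    unfolding B_def by (rule integral_unique[OF has_integral_Beta_real]) (use nu in auto)
  finally show "(LBINT t:{0<..}. tf \<nu> t) = sqrt (real \<nu>) / 2 * Beta (1/2) (real \<nu> / 2)" .
qed

lemma tf_full:
  assumes "\<nu> \<ge> 1"
  shows "integrable lborel (tf \<nu>)"
    "integral\<^sup>L lborel (tf \<nu>) = sqrt (real \<nu>) * Beta (1/2) (real \<nu> / 2)"
proof -
  have ev: "(\<lambda>x. tf \<nu> (-x)) = tf \<nu>" by (simp add: tf_even)
  have i1: "interval_lebesgue_integrable lborel 0 \<infinity> (tf \<nu>)"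
    using tf_half(1)[OF assms] by (simp add: interval_lebesgue_integral_0_infty)
  have i2: "interval_lebesgue_integrable lborel (-\<infinity>) 0 (tf \<nu>)"
    using interval_integrable_mirror[of 0 \<infinity> "tf \<nu>"] i1 unfolding ev by simp
  have s1: "set_integrable lborel {..<0} (tf \<nu>)"
    using i2 unfolding interval_lebesgue_integrable_def by (simp add: zero_ereal_def)
  have s2: "set_integrable lborel {0<..} (tf \<nu>)" by (rule tf_half(1)[OF assms])
  have s3: "set_integrable lborel {0..1} (tf \<nu>)"
    unfolding set_integrable_def
    by (rule borel_integrable_compact) (auto intro!: continuous_at_imp_continuous_on tf_cont[OF assms])
  have "set_integrable lborel ({..<0} \<union> {0..1} \<union> {0<..}) (tf \<nu>)"
    by (intro set_integrable_Un s1 s2 s3) auto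
  moreover have "{..<0} \<union> {0..1} \<union> {0<..} = (UNIV :: real set)" by auto
  ultimately have su: "set_integrable lborel UNIV (tf \<nu>)" by simp
  thus int: "integrable lborel (tf \<nu>)" unfolding set_integrable_def by simp
  have iu: "interval_lebesgue_integrable lborel (min (-\<infinity>) (min 0 \<infinity>)) (max (-\<infinity>) (max 0 \<infinity>)) (tf \<nu>)"
    using su unfolding interval_lebesgue_integrable_def by simp
  have "(LBINT x=-\<infinity>..0. tf \<nu> x) + (LBINT x=0..\<infinity>. tf \<nu> x) = (LBINT x=-\<infinity>..\<infinity>. tf \<nu> x)"
    by (rule interval_integral_sum[OF iu])
  moreover have "(LBINT x=-\<infinity>..0. tf \<nu> x) = (LBINT x=0..\<infinity>. tf \<nu> x)"
    using interval_integral_reflect[of "-\<infinity>" 0 "tf \<nu>"] by (simp add: tf_even)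
  moreover have "(LBINT x=-\<infinity>..\<infinity>. tf \<nu> x) = integral\<^sup>L lborel (tf \<nu>)"
    by (simp add: interval_lebesgue_integral_le_eq set_lebesgue_integral_def)
  moreover have "(LBINT x=0..\<infinity>. tf \<nu> x) = sqrt (real \<nu>) / 2 * Beta (1/2) (real \<nu> / 2)"
    using tf_half(2)[OF assms] by (simp add: interval_lebesgue_integral_0_infty)
  ultimately show "integral\<^sup>L lborel (tf \<nu>) = sqrt (real \<nu>) * Beta (1/2) (real \<nu> / 2)"
    by simp
qed

definition tC :: "nat \<Rightarrow> real" where
  "tC \<nu> = Gamma ((real \<nu> + 1) / 2) / (sqrt (real \<nu> * pi) * Gamma (real \<nu> / 2))"

lemma tC_pos: "\<nu> \<ge> 1 \<Longrightarrow> tC \<nu> > 0"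
  unfolding tC_def by (intro divide_pos_pos mult_pos_pos Gamma_real_pos) auto

lemma pdf_eq: "student_t_pdf \<nu> t = tC \<nu> * tf \<nu> t"
  unfolding student_t_pdf_def tC_def tf_def ..

lemma pdf_pos: "\<nu> \<ge> 1 \<Longrightarrow> student_t_pdf \<nu> t > 0"
  unfolding pdf_eq using tC_pos tf_pos by (intro mult_pos_pos)

lemma pdf_le: "\<nu> \<ge> 1 \<Longrightarrow> student_t_pdf \<nu> t \<le> tC \<nu>"
  unfolding pdf_eq using tC_pos[of \<nu>] tf_le1[of \<nu> t]
  by (simp add: mult_le_cancel_left1)

lemma tf_anti: assumes "\<nu> \<ge> 1" "\<bar>t\<bar> \<le> R" shows "tf \<nu> R \<le> tf \<nu> t"
proof -
  have "t\<^sup>2 \<le> R\<^sup>2" using assms(2) by (metis abs_le_square_iff abs_ge_self order_trans abs_le_D1 power2_abs)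
  hence "1 + t\<^sup>2 / real \<nu> \<le> 1 + R\<^sup>2 / real \<nu>" by (simp add: divide_right_mono)
  moreover have "0 < 1 + t\<^sup>2 / real \<nu>" using tf_base[OF assms(1), of t] by linarith
  ultimately show ?thesis unfolding tf_def
    by (intro powr_mono2') (auto simp: divide_nonpos_nonneg)
qed

lemma pdf_lower: "\<nu> \<ge> 1 \<Longrightarrow> \<bar>t\<bar> \<le> R \<Longrightarrow> tC \<nu> * tf \<nu> R \<le> student_t_pdf \<nu> t"
  unfolding pdf_eq using tC_pos[of \<nu>] tf_anti[of \<nu> t R] by simp

lemma pdf_int: "\<nu> \<ge> 1 \<Longrightarrow> integrable lborel (student_t_pdf \<nu>)"
  unfolding pdf_eq[abs_def] using tf_full(1) by simp

lemma gen_aux: "(a::real) > 0 \<Longrightarrow> b > 0 \<Longrightarrow> s > 0 \<Longrightarrow> q > 0 \<Longrightarrow>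
   b / (s * q * a) * (s * (q * a / b)) = 1"
  by (simp add: field_simps)

lemma pdf_total: assumes "\<nu> \<ge> 1" shows "integral\<^sup>L lborel (student_t_pdf \<nu>) = 1"
proof -
  have "integral\<^sup>L lborel (student_t_pdf \<nu>) = tC \<nu> * (sqrt (real \<nu>) * Beta (1/2) (real \<nu> / 2))"
    unfolding pdf_eq[abs_def] using tf_full[OF assms] by simp
  also have "Beta (1/2) (real \<nu> / 2) = sqrt pi * Gamma (real \<nu> / 2) / Gamma ((real \<nu> + 1) / 2)"
  proof -
    have eq: "1/2 + real \<nu> / 2 = (real \<nu> + 1) / 2" by (subst add_divide_distrib) simp
    show ?thesis unfolding Beta_altdef Gamma_one_half_real rGamma_inverse_Gamma eq
      by (simp only: divide_inverse)
  qed
  also have "tC \<nu> * (sqrt (real \<nu>) * (sqrt pi * Gamma (real \<nu> / 2) / Gamma ((real \<nu> + 1) / 2))) = 1"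
  proof -
    have "Gamma (real \<nu> / 2) > 0" "Gamma ((real \<nu> + 1) / 2) > 0" "sqrt (real \<nu>) > 0" "sqrt pi > 0"
      using assms by (auto intro!: Gamma_real_pos)
    thus ?thesis unfolding tC_def real_sqrt_mult by (rule gen_aux)
  qed
  finally show ?thesis .
qed

lemma pdf_cont: "\<nu> \<ge> 1 \<Longrightarrow> isCont (student_t_pdf \<nu>) t"
  unfolding pdf_eq[abs_def] using tf_cont by (intro continuous_intros) auto

lemma pdf_meas[measurable]: "\<nu> \<ge> 1 \<Longrightarrow> student_t_pdf \<nu> \<in> borel_measurable borel"
  using pdf_int[of \<nu>] by (simp add: borel_measurable_integrable)

lemma pdf_setint: "\<nu> \<ge> 1 \<Longrightarrow> A \<in> sets borel \<Longrightarrow> set_integrable lborel A (student_t_pdf \<nu>)"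
  unfolding set_integrable_def by (rule integrable_mult_indicator) (auto intro: pdf_int)

lemma set_int_nonneg:
  assumes "\<nu> \<ge> 1" shows "(LBINT t:A. student_t_pdf \<nu> t) \<ge> 0"
  unfolding set_lebesgue_integral_def
  by (intro integral_nonneg_AE AE_I2) (auto simp: indicator_def intro: less_imp_le pdf_pos assms)

lemma cdf_split:
  assumes "\<nu> \<ge> 1" "x \<le> y"
  shows "student_t_cdf \<nu> y = student_t_cdf \<nu> x + (LBINT t:{x<..y}. student_t_pdf \<nu> t)"
proof -
  have "{..y} = {..x} \<union> {x<..y}" using assms(2) by auto
  hence "student_t_cdf \<nu> y = (LBINT t:{..x} \<union> {x<..y}. student_t_pdf \<nu> t)"
    unfolding student_t_cdf_def by simp
  also have "\<dots> = student_t_cdf \<nu> x + (LBINT t:{x<..y}. student_t_pdf \<nu> t)"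
    unfolding student_t_cdf_def
    by (rule set_integral_Un) (auto intro!: pdf_setint assms(1))
  finally show ?thesis .
qed

lemma cdf_compl:
  assumes "\<nu> \<ge> 1"
  shows "student_t_cdf \<nu> x + (LBINT t:{x<..}. student_t_pdf \<nu> t) = 1"
proof -
  have "(LBINT t:{..x} \<union> {x<..}. student_t_pdf \<nu> t) = student_t_cdf \<nu> x + (LBINT t:{x<..}. student_t_pdf \<nu> t)"
    unfolding student_t_cdf_def
    by (rule set_integral_Un) (auto intro!: pdf_setint assms(1))
  moreover have "{..x} \<union> {x<..} = UNIV" by auto
  moreover have "(LBINT t:UNIV. student_t_pdf \<nu> t) = 1"
    using pdf_total[OF assms] by (simp add: set_lebesgue_integral_def)
  ultimately show ?thesis by simp
qed

lemma int_upper: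
  assumes "\<nu> \<ge> 1" "x \<le> y"
  shows "(LBINT t:{x<..y}. student_t_pdf \<nu> t) \<le> tC \<nu> * (y - x)"
proof -
  have "(LBINT t:{x<..y}. student_t_pdf \<nu> t) \<le> (LBINT t:{x<..y}. tC \<nu>)"
  proof (rule set_integral_mono)
    show "set_integrable lborel {x<..y} (student_t_pdf \<nu>)" by (auto intro!: pdf_setint assms(1))
    show "set_integrable lborel {x<..y} (\<lambda>t. tC \<nu>)"
      using assms(2) by (simp add: set_integrable_def integrable_indicator_iff)
  qed (auto intro!: pdf_le assms(1))
  also have "\<dots> = tC \<nu> * (y - x)" using assms(2) by (simp add: set_integral_const)
  finally show ?thesis .
qed

lemma int_lower:
  assumes "\<nu> \<ge> 1" "x < y"
  shows "(LBINT t:{x<..y}. student_t_pdf \<nu> t) > 0"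
proof -
  define m where "m = tC \<nu> * tf \<nu> (\<bar>x\<bar> + \<bar>y\<bar>)"
  have m: "m > 0" unfolding m_def using tC_pos[OF assms(1)] tf_pos[OF assms(1)] by simp
  have "(LBINT t:{x<..y}. m) \<le> (LBINT t:{x<..y}. student_t_pdf \<nu> t)"
  proof (rule set_integral_mono)
    show "set_integrable lborel {x<..y} (\<lambda>t. m)" using assms(2) by (simp add: set_integrable_def integrable_indicator_iff)
    show "set_integrable lborel {x<..y} (student_t_pdf \<nu>)" by (auto intro!: pdf_setint assms(1))
    fix t assume "t \<in> {x<..y}"
    hence "\<bar>t\<bar> \<le> \<bar>x\<bar> + \<bar>y\<bar>" by auto
    thus "m \<le> student_t_pdf \<nu> t" unfolding m_def by (rule pdf_lower[OF assms(1)])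
  qed
  moreover have "(LBINT t:{x<..y}. m) = (y - x) * m" using assms(2) by (simp add: set_integral_const)
  moreover have "(y - x) * m > 0" using m assms(2) by simp
  ultimately show ?thesis by linarith
qed

lemma cdf_nonneg: "\<nu> \<ge> 1 \<Longrightarrow> student_t_cdf \<nu> x \<ge> 0"
  unfolding student_t_cdf_def by (rule set_int_nonneg)

lemma cdf_strict: "\<nu> \<ge> 1 \<Longrightarrow> x < y \<Longrightarrow> student_t_cdf \<nu> x < student_t_cdf \<nu> y"
  using cdf_split[of \<nu> x y] int_lower[of \<nu> x y] by simp

lemma cdf_less1: assumes "\<nu> \<ge> 1" shows "student_t_cdf \<nu> x < 1"
proof -
  have "(LBINT t:{x<..x+1} \<union> {x+1<..}. student_t_pdf \<nu> t)
     = (LBINT t:{x<..x+1}. student_t_pdf \<nu> t) + (LBINT t:{x+1<..}. student_t_pdf \<nu> t)"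
    by (rule set_integral_Un) (auto intro!: pdf_setint assms(1))
  moreover have "{x<..x+1} \<union> {x+1<..} = {x<..}" by auto
  moreover have "(LBINT t:{x+1<..}. student_t_pdf \<nu> t) \<ge> 0"
    by (rule set_int_nonneg[OF assms])
  moreover have "(LBINT t:{x<..x+1}. student_t_pdf \<nu> t) > 0" by (rule int_lower[OF assms]) simp
  ultimately have "(LBINT t:{x<..}. student_t_pdf \<nu> t) > 0" by simp
  thus ?thesis using cdf_compl[OF assms, of x] by linarith
qed

lemma cdf_le1: "\<nu> \<ge> 1 \<Longrightarrow> student_t_cdf \<nu> x \<le> 1"
  using cdf_less1[of \<nu> x] by simp

lemma cdf_lip: assumes "\<nu> \<ge> 1" shows "(tC \<nu>)-lipschitz_on UNIV (student_t_cdf \<nu>)"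
proof (rule lipschitz_onI)
  show "0 \<le> tC \<nu>" using tC_pos[OF assms] by simp
  fix x y :: real
  show "dist (student_t_cdf \<nu> x) (student_t_cdf \<nu> y) \<le> tC \<nu> * dist x y"
  proof (cases "x \<le> y")
    case True
    thus ?thesis using cdf_split[OF assms True] int_upper[OF assms True]
      int_lower[OF assms, of x y] by (cases "x = y") (auto simp: dist_real_def)
  next
    case False
    hence F: "y \<le> x" by simp
    thus ?thesis using cdf_split[OF assms F] int_upper[OF assms F]
      int_lower[OF assms, of y x] by (cases "x = y") (auto simp: dist_real_def)
  qed
qed

lemma cdf_cont: "\<nu> \<ge> 1 \<Longrightarrow> continuous_on UNIV (student_t_cdf \<nu>)"
  by (rule lipschitz_on_continuous_on[OF cdf_lip])

lemma cdf_isCont: "\<nu> \<ge> 1 \<Longrightarrow> isCont (student_t_cdf \<nu>) x"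
  using cdf_cont continuous_on_eq_continuous_at by blast

lemma cdf_meas[measurable]: "\<nu> \<ge> 1 \<Longrightarrow> student_t_cdf \<nu> \<in> borel_measurable borel"
  using cdf_cont borel_measurable_continuous_onI by blast

lemma cont_meas: "continuous_on UNIV (f :: real \<Rightarrow> real) \<Longrightarrow> f \<in> borel_measurable lborel"
  using borel_measurable_continuous_onI by simp

lemma cdf_lim_seq: assumes "\<nu> \<ge> 1" shows "(\<lambda>n. student_t_cdf \<nu> (real n)) \<longlonglongrightarrow> 1"
proof -
  let ?g = "student_t_pdf \<nu>"
  have gm: "?g \<in> borel_measurable lborel"
    using pdf_int[OF assms] by (rule borel_measurable_integrable)
  have "(\<lambda>n. integral\<^sup>L lborel (\<lambda>t. indicator {..real n} t *\<^sub>R ?g t)) \<longlonglongrightarrow> integral\<^sup>L lborel ?g"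
  proof (rule integral_dominated_convergence[where w = ?g])
    show "?g \<in> borel_measurable lborel" by (rule gm)
    show "\<And>i. (\<lambda>t. indicator {..real i} t *\<^sub>R ?g t) \<in> borel_measurable lborel"
      using gm by measurable
    show "integrable lborel ?g" by (rule pdf_int[OF assms])
    show "AE t in lborel. (\<lambda>i. indicator {..real i} t *\<^sub>R ?g t) \<longlonglongrightarrow> ?g t"
    proof (rule AE_I2)
      fix t :: real
      obtain N where N: "t \<le> real N" using real_arch_simple by blast
      have "eventually (\<lambda>i. ?g t = indicator {..real i} t *\<^sub>R ?g t) sequentially"
        unfolding eventually_sequentially
        by (rule exI[of _ N]) (use N in \<open>auto simp: indicator_def\<close>)
      thus "(\<lambda>i. indicator {..real i} t *\<^sub>R ?g t) \<longlonglongrightarrow> ?g t"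
        by (rule Lim_transform_eventually[OF tendsto_const])
    qed
    show "\<And>i. AE t in lborel. norm (indicator {..real i} t *\<^sub>R ?g t) \<le> ?g t"
      using pdf_pos[OF assms] by (auto simp: indicator_def less_imp_le)
  qed
  thus ?thesis unfolding student_t_cdf_def set_lebesgue_integral_def pdf_total[OF assms] .
qed

lemma cdf_at_top: assumes "\<nu> \<ge> 1" shows "(student_t_cdf \<nu> \<longlongrightarrow> 1) at_top"
proof (rule order_tendstoI)
  fix a :: real assume "a < 1"
  from order_tendstoD(1)[OF cdf_lim_seq[OF assms] this]
  obtain N where N: "a < student_t_cdf \<nu> (real N)" unfolding eventually_sequentially by auto
  show "eventually (\<lambda>x. a < student_t_cdf \<nu> x) at_top"
    unfolding eventually_at_top_linorder
  proof (rule exI[of _ "real N"], intro allI impI)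
    fix x assume "x \<ge> real N"
    hence "student_t_cdf \<nu> (real N) \<le> student_t_cdf \<nu> x"
      using cdf_strict[OF assms, of "real N" x] by (cases "x = real N") auto
    thus "a < student_t_cdf \<nu> x" using N by linarith
  qed
next
  fix a :: real assume "a > 1"
  thus "eventually (\<lambda>x. student_t_cdf \<nu> x < a) at_top"
    using cdf_le1[OF assms] by (intro always_eventually allI) (meson le_less_trans)
qed

lemma pow_lip: "0 \<le> (a::real) \<Longrightarrow> a \<le> 1 \<Longrightarrow> 0 \<le> b \<Longrightarrow> b \<le> 1 \<Longrightarrow> \<bar>a ^ k - b ^ k\<bar> \<le> real k * \<bar>a - b\<bar>"
proof (induction k)
  case 0 thus ?case by simp
next
  case (Suc k)
  have "a ^ Suc k - b ^ Suc k = a * (a ^ k - b ^ k) + b ^ k * (a - b)" by (simp add: algebra_simps)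
  hence "\<bar>a ^ Suc k - b ^ Suc k\<bar> \<le> \<bar>a\<bar> * \<bar>a ^ k - b ^ k\<bar> + \<bar>b ^ k\<bar> * \<bar>a - b\<bar>"
    by (metis abs_mult abs_triangle_ineq)
  also have "\<dots> \<le> 1 * (real k * \<bar>a - b\<bar>) + 1 * \<bar>a - b\<bar>"
    using Suc by (intro add_mono mult_mono) (auto simp: power_le_one power_abs)
  finally show ?case by (simp add: algebra_simps)
qed

definition F1i :: "nat \<Rightarrow> real \<Rightarrow> nat \<Rightarrow> real \<Rightarrow> real" where
  "F1i \<nu> h k t = (student_t_cdf \<nu> (t + h)) ^ k * student_t_pdf \<nu> t"

lemma f1_eq: "f1 \<nu> h k = integral\<^sup>L lborel (F1i \<nu> h k)"
  unfolding f1_def F1i_def ..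

lemma F1i_cont: "\<nu> \<ge> 1 \<Longrightarrow> continuous_on UNIV (F1i \<nu> h k)"
  unfolding F1i_def
  by (intro continuous_at_imp_continuous_on ballI continuous_intros
      isCont_o2[OF _ cdf_isCont] pdf_cont) auto

lemma F1i_int: assumes "\<nu> \<ge> 1" shows "integrable lborel (F1i \<nu> h k)"
proof (rule Bochner_Integration.integrable_bound[OF pdf_int[OF assms]])
  show "F1i \<nu> h k \<in> borel_measurable lborel" by (rule cont_meas[OF F1i_cont[OF assms]])
  show "AE x in lborel. norm (F1i \<nu> h k x) \<le> norm (student_t_pdf \<nu> x)"
  proof (rule AE_I2)
    fix x
    have "0 \<le> student_t_cdf \<nu> (x + h) ^ k" "student_t_cdf \<nu> (x + h) ^ k \<le> 1"
      using cdf_nonneg[OF assms] cdf_le1[OF assms] by (auto intro: power_le_one)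
    thus "norm (F1i \<nu> h k x) \<le> norm (student_t_pdf \<nu> x)"
      unfolding F1i_def using pdf_pos[OF assms, of x]
      by (auto simp: abs_mult intro: mult_left_le_one_le)
  qed
qed

lemma F1i_bound: assumes "\<nu> \<ge> 1" shows "\<bar>F1i \<nu> h k x\<bar> \<le> student_t_pdf \<nu> x"
proof -
  have "0 \<le> student_t_cdf \<nu> (x + h) ^ k" "student_t_cdf \<nu> (x + h) ^ k \<le> 1"
    using cdf_nonneg[OF assms] cdf_le1[OF assms] by (auto intro: power_le_one)
  thus ?thesis
    unfolding F1i_def using pdf_pos[OF assms, of x]
    by (auto simp: abs_mult intro: mult_left_le_one_le)
qed

lemma f1_lip: assumes "\<nu> \<ge> 1" shows "(real k * tC \<nu>)-lipschitz_on UNIV (\<lambda>h. f1 \<nu> h k)"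
proof (rule lipschitz_onI)
  show "0 \<le> real k * tC \<nu>" using tC_pos[OF assms] by simp
  fix h1 h2 :: real
  let ?D = "\<lambda>t. F1i \<nu> h1 k t - F1i \<nu> h2 k t"
  let ?B = "\<lambda>t. (real k * tC \<nu> * \<bar>h1 - h2\<bar>) * student_t_pdf \<nu> t"
  have "f1 \<nu> h1 k - f1 \<nu> h2 k = integral\<^sup>L lborel ?D"
    unfolding f1_eq using F1i_int[OF assms] by simp
  also have "\<bar>\<dots>\<bar> \<le> integral\<^sup>L lborel ?B"
  proof (rule integral_abs_bound_integral)
    show "integrable lborel ?D" using F1i_int[OF assms] by simp
    show "integrable lborel ?B" using pdf_int[OF assms] by simp
    fix t
    let ?a = "student_t_cdf \<nu> (t + h1)" and ?b = "student_t_cdf \<nu> (t + h2)"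
    have "\<bar>?a ^ k - ?b ^ k\<bar> \<le> real k * \<bar>?a - ?b\<bar>"
      using cdf_nonneg[OF assms] cdf_le1[OF assms] by (intro pow_lip) auto
    also have "\<bar>?a - ?b\<bar> \<le> tC \<nu> * \<bar>h1 - h2\<bar>"
      using lipschitz_onD[OF cdf_lip[OF assms], of "t + h1" "t + h2"] by (simp add: dist_real_def)
    hence "real k * \<bar>?a - ?b\<bar> \<le> real k * (tC \<nu> * \<bar>h1 - h2\<bar>)" by (intro mult_left_mono) auto
    finally have *: "\<bar>?a ^ k - ?b ^ k\<bar> \<le> real k * tC \<nu> * \<bar>h1 - h2\<bar>" by (simp add: mult_ac)
    have "\<bar>?D t\<bar> = \<bar>?a ^ k - ?b ^ k\<bar> * student_t_pdf \<nu> t"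
      unfolding F1i_def using pdf_pos[OF assms, of t]
      by (simp add: abs_mult left_diff_distrib[symmetric])
    also have "\<dots> \<le> ?B t"
      using * pdf_pos[OF assms, of t] by (intro mult_right_mono) auto
    finally show "\<bar>?D t\<bar> \<le> ?B t" .
  qed
  also have "integral\<^sup>L lborel ?B = real k * tC \<nu> * \<bar>h1 - h2\<bar>"
    using pdf_total[OF assms] by simp
  finally show "dist (f1 \<nu> h1 k) (f1 \<nu> h2 k) \<le> real k * tC \<nu> * dist h1 h2"
    by (simp add: dist_real_def)
qed

lemma f1_cont: "\<nu> \<ge> 1 \<Longrightarrow> continuous_on A (\<lambda>h. f1 \<nu> h k)"
  by (rule continuous_on_subset[OF lipschitz_on_continuous_on[OF f1_lip]]) auto

lemma int_pos:
  fixes f :: "real \<Rightarrow> real"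
  assumes "integrable lborel f" "\<And>x. f x > 0"
  shows "integral\<^sup>L lborel f > 0"
proof -
  have ge: "integral\<^sup>L lborel f \<ge> 0" using assms(2) by (intro integral_nonneg_AE AE_I2) (simp add: less_imp_le)
  have "integral\<^sup>L lborel f \<noteq> 0"
  proof
    assume "integral\<^sup>L lborel f = 0"
    hence "AE x in lborel. f x = 0"
      using integral_nonneg_eq_0_iff_AE[OF assms(1)] assms(2) by (simp add: less_imp_le)
    hence "AE (x::real) in lborel. False"
    proof eventually_elim
      case (elim x) thus False using assms(2)[of x] by simp
    qed
    hence "emeasure lborel (UNIV :: real set) = 0"
      using AE_iff_measurable[of "UNIV::real set" lborel "\<lambda>x. False"] by simp
    thus False by simp
  qed
  thus ?thesis using ge by simp
qed

lemma f1_strict: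
  assumes "\<nu> \<ge> 1" "k \<ge> 1" "h1 < h2"
  shows "f1 \<nu> h1 k < f1 \<nu> h2 k"
proof -
  let ?D = "\<lambda>t. F1i \<nu> h2 k t - F1i \<nu> h1 k t"
  have "integral\<^sup>L lborel ?D > 0"
  proof (rule int_pos)
    show "integrable lborel ?D" using F1i_int[OF assms(1)] by simp
    fix t
    have "student_t_cdf \<nu> (t + h1) ^ k < student_t_cdf \<nu> (t + h2) ^ k"
      using cdf_strict[OF assms(1), of "t + h1" "t + h2"] assms cdf_nonneg[OF assms(1)]
      by (intro power_strict_mono) auto
    thus "?D t > 0" unfolding F1i_def using pdf_pos[OF assms(1), of t]
      by (simp add: left_diff_distrib[symmetric])
  qed
  thus ?thesis unfolding f1_eq using F1i_int[OF assms(1)] by simp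
qed

lemma f1_lim_h: assumes "\<nu> \<ge> 1" shows "(\<lambda>n. f1 \<nu> (real n) k) \<longlonglongrightarrow> 1"
proof -
  have "(\<lambda>n. integral\<^sup>L lborel (F1i \<nu> (real n) k)) \<longlonglongrightarrow> integral\<^sup>L lborel (student_t_pdf \<nu>)"
  proof (rule integral_dominated_convergence[where w = "student_t_pdf \<nu>"])
    show "student_t_pdf \<nu> \<in> borel_measurable lborel"
      using pdf_int[OF assms] by (rule borel_measurable_integrable)
    show "\<And>i. F1i \<nu> (real i) k \<in> borel_measurable lborel"
      using F1i_int[OF assms] by (rule borel_measurable_integrable)
    show "integrable lborel (student_t_pdf \<nu>)" by (rule pdf_int[OF assms])
    show "\<And>i. AE t in lborel. norm (F1i \<nu> (real i) k t) \<le> student_t_pdf \<nu> t"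
      using F1i_bound[OF assms] by auto
    show "AE t in lborel. (\<lambda>i. F1i \<nu> (real i) k t) \<longlonglongrightarrow> student_t_pdf \<nu> t"
    proof (rule AE_I2)
      fix t
      have "filterlim (\<lambda>n. t + real n) at_top sequentially"
        by (rule filterlim_tendsto_add_at_top[OF tendsto_const filterlim_real_sequentially])
      hence "(\<lambda>n. student_t_cdf \<nu> (t + real n)) \<longlonglongrightarrow> 1"
        by (rule filterlim_compose[OF cdf_at_top[OF assms]])
      hence "(\<lambda>n. student_t_cdf \<nu> (t + real n) ^ k * student_t_pdf \<nu> t) \<longlonglongrightarrow> 1 ^ k * student_t_pdf \<nu> t"
        by (intro tendsto_intros)
      thus "(\<lambda>i. F1i \<nu> (real i) k t) \<longlonglongrightarrow> student_t_pdf \<nu> t"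
        unfolding F1i_def by simp
    qed
  qed
  thus ?thesis unfolding f1_eq pdf_total[OF assms] .
qed

lemma f1_lim_k: assumes "\<nu> \<ge> 1" shows "(\<lambda>k. f1 \<nu> 0 k) \<longlonglongrightarrow> 0"
proof -
  have "(\<lambda>k. integral\<^sup>L lborel (F1i \<nu> 0 k)) \<longlonglongrightarrow> integral\<^sup>L lborel (\<lambda>t::real. 0::real)"
  proof (rule integral_dominated_convergence[where w = "student_t_pdf \<nu>"])
    show "(\<lambda>t::real. 0::real) \<in> borel_measurable lborel" by simp
    show "\<And>i. F1i \<nu> 0 i \<in> borel_measurable lborel"
      using F1i_int[OF assms] by (rule borel_measurable_integrable)
    show "integrable lborel (student_t_pdf \<nu>)" by (rule pdf_int[OF assms])
    show "\<And>i. AE t in lborel. norm (F1i \<nu> 0 i t) \<le> student_t_pdf \<nu> t"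
      using F1i_bound[OF assms] by auto
    show "AE t in lborel. (\<lambda>i. F1i \<nu> 0 i t) \<longlonglongrightarrow> 0"
    proof (rule AE_I2)
      fix t
      have "norm (student_t_cdf \<nu> t) < 1"
        using cdf_nonneg[OF assms, of t] cdf_less1[OF assms, of t] by simp
      hence "(\<lambda>n. student_t_cdf \<nu> t ^ n * student_t_pdf \<nu> t) \<longlonglongrightarrow> 0 * student_t_pdf \<nu> t"
        by (intro tendsto_intros)
      thus "(\<lambda>i. F1i \<nu> 0 i t) \<longlonglongrightarrow> 0"
        unfolding F1i_def by simp
    qed
  qed
  thus ?thesis unfolding f1_eq by simp
qed

theorem lemma3:
  fixes \<nu> :: nat and p :: real
  assumes "\<nu> \<ge> 1" and "0 < p" and "p < 1"
  shows "\<exists>K::real. K > 0 \<and>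
           (\<forall>k::nat. real k > K \<longrightarrow> (\<exists>!h::real. h > 0 \<and> f1 \<nu> h k = p))"
proof -
  from order_tendstoD(2)[OF f1_lim_k[OF assms(1)] assms(2)]
  obtain N where N: "\<And>k. k \<ge> N \<Longrightarrow> f1 \<nu> 0 k < p" unfolding eventually_sequentially by auto
  show ?thesis
  proof (rule exI[of _ "real N + 1"], intro conjI allI impI)
    show "real N + 1 > 0" by simp
    fix k :: nat assume k: "real k > real N + 1"
    hence kN: "k \<ge> N" and k1: "k \<ge> 1" by auto
    have f0: "f1 \<nu> 0 k < p" using N[OF kN] .
    from order_tendstoD(1)[OF f1_lim_h[OF assms(1), of k] assms(3)]
    obtain n where n: "f1 \<nu> (real n) k > p" unfolding eventually_sequentially by auto
    obtain h where h: "0 \<le> h" "h \<le> real n" "f1 \<nu> h k = p"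
      using IVT'[of "\<lambda>h. f1 \<nu> h k" 0 p "real n"] f0 n f1_cont[OF assms(1)] by force
    have hpos: "h > 0" using h f0 by (cases "h = 0") auto
    show "\<exists>!h. h > 0 \<and> f1 \<nu> h k = p"
    proof (rule ex1I[of _ h])
      show "h > 0 \<and> f1 \<nu> h k = p" using hpos h by simp
      fix h' assume h': "h' > 0 \<and> f1 \<nu> h' k = p"
      show "h' = h"
      proof (rule ccontr)
        assume "h' \<noteq> h"
        hence "h' < h \<or> h < h'" by linarith
        thus False using f1_strict[OF assms(1) k1, of h' h] f1_strict[OF assms(1) k1, of h h'] h h'
          by auto
      qed
    qed
  qed
qed

end
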